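(* Let $G$ be a groupoid that is a generalised inflation of its subgroupoid $U$, and suppose that $G$ is a right modular groupoid and that $U$ is right cancellative (i.e. for $a,b,c \in U$, $ac = bc$ implies $a = b$). Then $G$ is an inflation of $U$.
   Context: A groupoid is a set with a binary operation, written $xy$ or $x\cdot y$. A groupoid $G$ is right modular if $xy\cdot z = zy\cdot x$ for all $x,y,z \in G$. A groupoid $G$ is an inflation of its subgroupoid $U$ if $G = \bigcup_{u\in U} G_u$ where (1) $u \in G_u$ for all $u\in U$, (2) $G_u \cap G_v = \emptyset$ for $u \ne v$, and (3) $x \in G_u$, $y\in G_v$ implies $xy = uv$. A groupoid $G$ is a generalised inflation of its subgroupoid $U$ if $G = \bigcup_{u\in U} G_u$ where (1) $u \in G_u$ for all $u \in U$, (2) $G_u\cap G_v=\emptyset$ for $u\neq v$, (3) for every $x \in G$ there are maps $\alpha_x, \beta_x : U \to U$ such that for all $x \in G_u$ and $y \in G_v$ ($u,v\in U$) one has $xy = \alpha_x(v)\cdot \beta_y(u)$ (product computed in $U$), and (4) for $u \in U$, $\alpha_u$ and $\beta_u$ are both the constant map on $U$ with value $u$. *)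

theory Defs
  imports Main
begin

definition groupoid :: "'a set \<Rightarrow> ('a \<Rightarrow> 'a \<Rightarrow> 'a) \<Rightarrow> bool" where
  "groupoid S m \<longleftrightarrow> (\<forall>x\<in>S. \<forall>y\<in>S. m x y \<in> S)"

definition subgroupoid :: "'a set \<Rightarrow> 'a set \<Rightarrow> ('a \<Rightarrow> 'a \<Rightarrow> 'a) \<Rightarrow> bool" where
  "subgroupoid U G m \<longleftrightarrow> U \<subseteq> G \<and> (\<forall>x\<in>U. \<forall>y\<in>U. m x y \<in> U)"

definition right_modular :: "'a set \<Rightarrow> ('a \<Rightarrow> 'a \<Rightarrow> 'a) \<Rightarrow> bool" where
  "right_modular G m \<longleftrightarrow> (\<forall>x\<in>G. \<forall>y\<in>G. \<forall>z\<in>G. m (m x y) z = m (m z y) x)"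

definition right_cancellative :: "'a set \<Rightarrow> ('a \<Rightarrow> 'a \<Rightarrow> 'a) \<Rightarrow> bool" where
  "right_cancellative U m \<longleftrightarrow> (\<forall>a\<in>U. \<forall>b\<in>U. \<forall>c\<in>U. m a c = m b c \<longrightarrow> a = b)"

definition block_decomp :: "'a set \<Rightarrow> 'a set \<Rightarrow> ('a \<Rightarrow> 'a set) \<Rightarrow> bool" where
  "block_decomp G U B \<longleftrightarrow>
     G = (\<Union>u\<in>U. B u) \<and> (\<forall>u\<in>U. u \<in> B u) \<and>
     (\<forall>u\<in>U. \<forall>v\<in>U. u \<noteq> v \<longrightarrow> B u \<inter> B v = {})"

definition inflation :: "'a set \<Rightarrow> ('a \<Rightarrow> 'a \<Rightarrow> 'a) \<Rightarrow> 'a set \<Rightarrow> bool" where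
  "inflation G m U \<longleftrightarrow> subgroupoid U G m \<and>
     (\<exists>B. block_decomp G U B \<and>
        (\<forall>u\<in>U. \<forall>v\<in>U. \<forall>x\<in>B u. \<forall>y\<in>B v. m x y = m u v))"

definition generalised_inflation :: "'a set \<Rightarrow> ('a \<Rightarrow> 'a \<Rightarrow> 'a) \<Rightarrow> 'a set \<Rightarrow> bool" where
  "generalised_inflation G m U \<longleftrightarrow> subgroupoid U G m \<and>
     (\<exists>B (\<alpha> :: 'a \<Rightarrow> 'a \<Rightarrow> 'a) (\<beta> :: 'a \<Rightarrow> 'a \<Rightarrow> 'a).
        block_decomp G U B \<and>
        (\<forall>x\<in>G. \<forall>w\<in>U. \<alpha> x w \<in> U \<and> \<beta> x w \<in> U) \<and>
        (\<forall>u\<in>U. \<forall>v\<in>U. \<forall>x\<in>B u. \<forall>y\<in>B v. m x y = m (\<alpha> x v) (\<beta> y u)) \<and>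
        (\<forall>u\<in>U. \<forall>w\<in>U. \<alpha> u w = u \<and> \<beta> u w = u))"

end

theory Submission
  imports Defs
begin

theorem theorem1:
  fixes G U :: "'a set" and m :: "'a \<Rightarrow> 'a \<Rightarrow> 'a"
  assumes "groupoid G m"
    and "generalised_inflation G m U"
    and "right_modular G m"
    and "right_cancellative U m"
  shows "inflation G m U"
proof -
  have sub: "subgroupoid U G m" using assms(2) unfolding generalised_inflation_def by blast
  then have UG: "U \<subseteq> G" and Ucl: "\<And>a b. a \<in> U \<Longrightarrow> b \<in> U \<Longrightarrow> m a b \<in> U"
    unfolding subgroupoid_def by auto
  obtain B \<alpha> \<beta> where bd: "block_decomp G U B"
    and ab: "\<forall>x\<in>G. \<forall>w\<in>U. \<alpha> x w \<in> U \<and> \<beta> x w \<in> U"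
    and pr: "\<forall>u\<in>U. \<forall>v\<in>U. \<forall>x\<in>B u. \<forall>y\<in>B v. m x y = m (\<alpha> x v) (\<beta> y u)"
    and cst: "\<forall>u\<in>U. \<forall>w\<in>U. \<alpha> u w = u \<and> \<beta> u w = u"
    using assms(2) unfolding generalised_inflation_def by blast
  have Gdef: "G = (\<Union>u\<in>U. B u)" and uB: "\<And>u. u \<in> U \<Longrightarrow> u \<in> B u"
    using bd unfolding block_decomp_def by auto
  have mod: "\<And>x y z. x \<in> G \<Longrightarrow> y \<in> G \<Longrightarrow> z \<in> G \<Longrightarrow> m (m x y) z = m (m z y) x"
    using assms(3) unfolding right_modular_def by blast
  have canc: "\<And>a b c. a \<in> U \<Longrightarrow> b \<in> U \<Longrightarrow> c \<in> U \<Longrightarrow> m a c = m b c \<Longrightarrow> a = b"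
    using assms(4) unfolding right_cancellative_def by blast
  have key: "\<exists>q\<in>U. \<forall>d\<in>U. m d x = m d q \<and> m x d = m q d" if xG: "x \<in> G" for x
  proof -
    from xG Gdef obtain u where u: "u \<in> U" "x \<in> B u" by auto
    have dx: "m d x = m d (\<beta> x d)" if "d \<in> U" for d
      using pr that u uB cst by metis
    have xd: "m x d = m (\<alpha> x d) d" if "d \<in> U" for d
      using pr that u uB cst by metis
    have xdU: "m x d \<in> U" if "d \<in> U" for d using xd[OF that] ab xG that Ucl by auto
    have bU: "\<beta> x d \<in> U" if "d \<in> U" for d using ab xG that by auto
    have c1: "m c (\<beta> x c) = m c (\<beta> x d)" if c: "c \<in> U" and d: "d \<in> U" for c d
    proof -
      have "m (m d x) c = m (m c x) d" using mod[of d x c] c d xG UG by auto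
      hence "m (m d (\<beta> x d)) c = m (m c (\<beta> x c)) d" using dx c d by simp
      moreover have "m (m d (\<beta> x d)) c = m (m c (\<beta> x d)) d"
        using mod[of d "\<beta> x d" c] c d bU UG by auto
      ultimately show ?thesis using canc[of "m c (\<beta> x c)" "m c (\<beta> x d)" d] c d bU Ucl by auto
    qed
    define q where "q = \<beta> x u"
    have qU: "q \<in> U" using bU u q_def by auto
    have dq: "m d x = m d q" if "d \<in> U" for d using dx[OF that] c1[OF that u(1)] q_def by simp
    have xq: "m x d = m q d" if d: "d \<in> U" for d
    proof -
      have "m (m x d) u = m (m u d) x" using mod[of x d u] d u xG UG by auto
      also have "\<dots> = m (m u d) q" using dq Ucl d u by auto
      also have "\<dots> = m (m q d) u" using mod[of u d q] d u qU UG by auto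
      finally show ?thesis using canc[of "m x d" "m q d" u] xdU d u qU Ucl by auto
    qed
    show ?thesis using qU dq xq by blast
  qed
  define Q where "Q x = (SOME q. q \<in> U \<and> (\<forall>d\<in>U. m d x = m d q \<and> m x d = m q d))" for x
  have Q: "Q x \<in> U \<and> (\<forall>d\<in>U. m d x = m d (Q x) \<and> m x d = m (Q x) d)" if "x \<in> G" for x
    unfolding Q_def using someI_ex[OF key[OF that, unfolded Bex_def]] by blast
  have Qu: "Q u = u" if u: "u \<in> U" for u
  proof -
    obtain d where "d \<in> U" using u by blast
    hence "m u d = m (Q u) d" using Q[of u] u UG by auto
    thus ?thesis using canc[of u "Q u" d] \<open>d \<in> U\<close> u Q[of u] UG by auto
  qed
  define B' where "B' w = {x \<in> G. Q x = w}" for w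
  have bd': "block_decomp G U B'"
    unfolding block_decomp_def B'_def using Q Qu UG by auto
  have prod: "m x y = m (Q x) (Q y)" if x: "x \<in> G" and y: "y \<in> G" for x y
  proof -
    obtain u where u: "u \<in> U" "x \<in> B u" using x Gdef by auto
    obtain v where v: "v \<in> U" "y \<in> B v" using y Gdef by auto
    have xyU: "m x y \<in> U" using pr u v ab x y Ucl by metis
    have "m (m x y) u = m (m u y) x" using mod[of x y u] x y u UG by auto
    also have "\<dots> = m (m u (Q y)) x" using Q[OF y] u by auto
    also have "\<dots> = m (m u (Q y)) (Q x)" using Q[OF x] Q[OF y] u Ucl by auto
    also have "\<dots> = m (m (Q x) (Q y)) u" proof -
      have "Q x \<in> U" "Q y \<in> U" using Q x y by auto
      thus ?thesis using mod[of u "Q y" "Q x"] u UG by blast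
    qed
    finally show ?thesis using canc[of "m x y" "m (Q x) (Q y)" u] xyU u Q x y Ucl by auto
  qed
  show ?thesis unfolding inflation_def
    using sub bd' prod by (auto simp: B'_def)
qed

end
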